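(* Let $\kappa_2$ be an infinite regular cardinal with $\kappa_2<\mathfrak b$. Then there is no $(\aleph_0,\kappa_2)$-peculiar cut in ${}^\omega\omega$.
   Context: For $f,g\in{}^\omega\omega$: $f\le^*g$ iff $f(n)\le g(n)$ for all but finitely many $n$; $f<^*g$ iff $f(n)<g(n)$ for all but finitely many $n$. $\mathfrak b$ is the least size of a family $F\subseteq{}^\omega\omega$ with no $g$ such that $f\le^*g$ for all $f\in F$. For infinite regular cardinals $\kappa_1,\kappa_2$, a $(\kappa_1,\kappa_2)$-peculiar cut in ${}^\omega\omega$ is a pair $(\langle f_i:i<\kappa_1\rangle,\langle f^\alpha:\alpha<\kappa_2\rangle)$ of sequences in ${}^\omega\omega$ such that: ($\alpha$) $f_j<^*f_i$ for $i<j<\kappa_1$; ($\beta$) $f^\alpha<^*f^\beta$ for $\alpha<\beta<\kappa_2$; ($\gamma$) $f^\alpha<^*f_i$ for all $i<\kappa_1$, $\alpha<\kappa_2$; ($\delta$) if $f\in{}^\omega\omega$ and $f\le^*f_i$ for all $i<\kappa_1$, then $f\le^*f^\alpha$ for some $\alpha<\kappa_2$; ($\varepsilon$) if $f\in{}^\omega\omega$ and $f^\alpha\le^*f$ for all $\alpha<\kappa_2$, then $f_i\le^*f$ for some $i<\kappa_1$. *)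

theory Defs
  imports Main
begin

definition le_star :: "(nat \<Rightarrow> nat) \<Rightarrow> (nat \<Rightarrow> nat) \<Rightarrow> bool" where
  "le_star f g \<longleftrightarrow> finite {n. \<not> f n \<le> g n}"

definition less_star :: "(nat \<Rightarrow> nat) \<Rightarrow> (nat \<Rightarrow> nat) \<Rightarrow> bool" where
  "less_star f g \<longleftrightarrow> finite {n. \<not> f n < g n}"

definition unbounded_family :: "(nat \<Rightarrow> nat) set \<Rightarrow> bool" where
  "unbounded_family F \<longleftrightarrow> \<not> (\<exists>g. \<forall>f\<in>F. le_star f g)"

text \<open>kappa < b: kappa is strictly below the cardinality of every unbounded family
  (i.e. below the least such cardinality).\<close>
definition less_than_b :: "'k rel \<Rightarrow> bool" where
  "less_than_b \<kappa> \<longleftrightarrow> (\<forall>F. unbounded_family F \<longrightarrow> (\<kappa>, card_of F) \<in> ordLess)"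

text \<open>Peculiar cut: cardinals kappa1, kappa2 are given as (cardinal) well-orders r1, r2;
  sequences are indexed by the fields of r1, r2; i < j means (i,j) \<in> r and i \<noteq> j.\<close>
definition peculiar_cut ::
  "'a rel \<Rightarrow> 'b rel \<Rightarrow> ('a \<Rightarrow> nat \<Rightarrow> nat) \<Rightarrow> ('b \<Rightarrow> nat \<Rightarrow> nat) \<Rightarrow> bool" where
  "peculiar_cut r1 r2 fl fu \<longleftrightarrow>
     (\<forall>i\<in>Field r1. \<forall>j\<in>Field r1. (i, j) \<in> r1 \<and> i \<noteq> j \<longrightarrow> less_star (fl j) (fl i)) \<and>
     (\<forall>\<alpha>\<in>Field r2. \<forall>\<beta>\<in>Field r2. (\<alpha>, \<beta>) \<in> r2 \<and> \<alpha> \<noteq> \<beta> \<longrightarrow> less_star (fu \<alpha>) (fu \<beta>)) \<and>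
     (\<forall>i\<in>Field r1. \<forall>\<alpha>\<in>Field r2. less_star (fu \<alpha>) (fl i)) \<and>
     (\<forall>f. (\<forall>i\<in>Field r1. le_star f (fl i)) \<longrightarrow> (\<exists>\<alpha>\<in>Field r2. le_star f (fu \<alpha>))) \<and>
     (\<forall>f. (\<forall>\<alpha>\<in>Field r2. le_star (fu \<alpha>) f) \<longrightarrow> (\<exists>i\<in>Field r1. le_star (fl i) f))"

end

theory Submission
  imports Defs
begin

lemma less_star_ev: "less_star f g \<Longrightarrow> \<exists>N. \<forall>n\<ge>N. f n < g n"
  unfolding less_star_def
  by (metis (mono_tags, lifting) finite_nat_set_iff_bounded_le mem_Collect_eq not_less_eq_eq)

lemma le_star_ev: "le_star f g \<Longrightarrow> \<exists>N. \<forall>n\<ge>N. f n \<le> g n"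
  unfolding le_star_def
  by (metis (mono_tags, lifting) finite_nat_set_iff_bounded_le mem_Collect_eq not_less_eq_eq)

lemma ev_le_star: "\<forall>n\<ge>N. f n \<le> g n \<Longrightarrow> le_star f g"
  unfolding le_star_def
  by (metis (mono_tags, lifting) finite_nat_set_iff_bounded_le mem_Collect_eq nat_le_linear)

lemma bound_below: "\<exists>M::nat. \<forall>i<(N::nat). (k::nat\<Rightarrow>nat) i \<le> M"
proof -
  have "\<forall>i<N. k i \<le> Max (k ` {..<N})" by (simp)
  then show ?thesis by blast
qed

theorem proposition2p10:
  fixes \<kappa>2 :: "'k rel"
  assumes "Card_order \<kappa>2" and "Cinfinite \<kappa>2" and "regularCard \<kappa>2"
    and "less_than_b \<kappa>2"
  shows "\<not> (\<exists>(fl :: nat \<Rightarrow> nat \<Rightarrow> nat) (fu :: 'k \<Rightarrow> nat \<Rightarrow> nat). peculiar_cut natLeq \<kappa>2 fl fu)"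
proof
  assume "\<exists>(fl :: nat \<Rightarrow> nat \<Rightarrow> nat) (fu :: 'k \<Rightarrow> nat \<Rightarrow> nat). peculiar_cut natLeq \<kappa>2 fl fu"
  then obtain fl :: "nat \<Rightarrow> nat \<Rightarrow> nat" and fu :: "'k \<Rightarrow> nat \<Rightarrow> nat"
    where pc: "peculiar_cut natLeq \<kappa>2 fl fu" by blast
  have dec: "\<And>i. less_star (fl (Suc i)) (fl i)"
    using pc unfolding peculiar_cut_def Field_natLeq by (auto simp: natLeq_def)
  have gam: "\<And>i \<alpha>. \<alpha> \<in> Field \<kappa>2 \<Longrightarrow> less_star (fu \<alpha>) (fl i)"
    using pc unfolding peculiar_cut_def Field_natLeq by (auto simp: natLeq_def)
  have eps: "\<And>f. (\<forall>\<alpha>\<in>Field \<kappa>2. le_star (fu \<alpha>) f) \<Longrightarrow> \<exists>i. le_star (fl i) f"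
    using pc unfolding peculiar_cut_def Field_natLeq by (auto simp: natLeq_def)
  define ka where "ka \<alpha> i = (LEAST N. \<forall>n\<ge>N. fu \<alpha> n < fl i n)" for \<alpha> i
  have ka: "\<And>\<alpha> i n. \<alpha> \<in> Field \<kappa>2 \<Longrightarrow> n \<ge> ka \<alpha> i \<Longrightarrow> fu \<alpha> n < fl i n"
  proof -
    fix \<alpha> i n assume a: "\<alpha> \<in> Field \<kappa>2" "n \<ge> ka \<alpha> i"
    have "\<exists>N. \<forall>n\<ge>N. fu \<alpha> n < fl i n" using less_star_ev[OF gam[OF a(1)]] .
    then have "\<forall>n\<ge>ka \<alpha> i. fu \<alpha> n < fl i n" unfolding ka_def by (rule LeastI_ex)
    then show "fu \<alpha> n < fl i n" using a(2) by blast
  qed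
  have "\<exists>k. \<forall>f\<in>ka ` Field \<kappa>2. le_star f k"
  proof (rule ccontr)
    assume "\<not> ?thesis"
    then have "unbounded_family (ka ` Field \<kappa>2)" unfolding unbounded_family_def by blast
    then have "(\<kappa>2, card_of (ka ` Field \<kappa>2)) \<in> ordLess"
      using assms(4) unfolding less_than_b_def by blast
    moreover have "(card_of (ka ` Field \<kappa>2), card_of (Field \<kappa>2)) \<in> ordLeq" by (rule card_of_image)
    moreover have "(card_of (Field \<kappa>2), \<kappa>2) \<in> ordIso" using assms(1) by (rule card_of_Field_ordIso)
    ultimately have "(\<kappa>2, \<kappa>2) \<in> ordLess"
      by (meson ordIso_iff_ordLeq ordLess_ordLeq_trans ordLeq_transitive)
    then show False using ordLess_irreflexive by blast
  qed
  then obtain k where k: "\<And>\<alpha>. \<alpha> \<in> Field \<kappa>2 \<Longrightarrow> le_star (ka \<alpha>) k" by blast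
  define S where "S n = {i. i \<le> n \<and> k i \<le> n}" for n
  have finS: "finite (S n)" for n unfolding S_def by auto
  define h where "h n = (if S n = {} then 0 else Min ((\<lambda>i. fl i n) ` S n))" for n
  have h_le: "le_star h (fl i)" for i
  proof (rule ev_le_star[where N="max i (k i)"], intro allI impI)
    fix n assume "max i (k i) \<le> n"
    then have "i \<in> S n" unfolding S_def by auto
    then show "h n \<le> fl i n" unfolding h_def using finS[of n] by (auto intro: Min_le)
  qed
  have fu_le: "le_star (fu \<alpha>) h" if a: "\<alpha> \<in> Field \<kappa>2" for \<alpha>
  proof -
    obtain N where N: "\<forall>i\<ge>N. ka \<alpha> i \<le> k i" using le_star_ev[OF k[OF a]] by blast
    obtain M where M: "\<forall>i<N. ka \<alpha> i \<le> M" using bound_below by blast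
    show ?thesis
    proof (rule ev_le_star[where N="max (k 0) M"], intro allI impI)
      fix n assume n: "max (k 0) M \<le> n"
      then have ne: "S n \<noteq> {}" unfolding S_def by auto
      have "\<forall>i\<in>S n. fu \<alpha> n < fl i n"
      proof
        fix i assume "i \<in> S n"
        then have "k i \<le> n" unfolding S_def by auto
        then have "ka \<alpha> i \<le> n" using N M n by (cases "i < N") (force, meson le_trans not_less)
        then show "fu \<alpha> n < fl i n" using ka a by blast
      qed
      then show "fu \<alpha> n \<le> h n" unfolding h_def using ne finS[of n] by auto
    qed
  qed
  obtain i where i: "le_star (fl i) h" using eps fu_le by blast
  obtain N1 where N1: "\<forall>n\<ge>N1. fl i n \<le> h n" using le_star_ev[OF i] by blast
  obtain N2 where N2: "\<forall>n\<ge>N2. h n \<le> fl (Suc i) n" using le_star_ev[OF h_le] by blast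
  obtain N3 where N3: "\<forall>n\<ge>N3. fl (Suc i) n < fl i n" using less_star_ev[OF dec] by blast
  have "fl i (max N1 (max N2 N3)) < fl i (max N1 (max N2 N3))"
    using N1 N2 N3 by (meson le_less_trans le_trans max.cobounded1 max.cobounded2)
  then show False by simp
qed

end
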